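(* Fix any total budget $\mathrm{TB}\in\mathbb N_0$. If the integers satisfy $n>m$, then the integer game forms satisfy $(n)>(m)$.
   Context: Game forms are defined recursively: $G=\{G^{\mathcal L}\mid G^{\mathcal R}\}$ with finite sets of Left and Right options, and finite birthday. Integer game forms: $(0)=\{\varnothing\mid\varnothing\}$; for $n\in\mathbb N$, $(n)=\{(n-1)\mid\varnothing\}$ and $(-n)=\overline{(n)}=\{\varnothing\mid(-(n-1))\}$, where the conjugate is $\bar G=\{\overline{G^{\mathcal R}}\mid\overline{G^{\mathcal L}}\}$. The budget set for total budget $\mathrm{TB}$ is $\mathcal B=\{0,\dots,\mathrm{TB},\hat 0,\dots,\widehat{\mathrm{TB}}\}$: state $p$ (resp. $\hat p$) means Left holds $p$ dollars and Right holds $\mathrm{TB}-p$, and Right (resp. Left) holds the tie-breaking marker. Play of $(G,\tilde p)$: at every position (terminal ones included) both players bid simultaneously, Left $\ell\in\{0,\dots,p\}$, Right $r\in\{0,\dots,\mathrm{TB}-p\}$. If Left holds the marker (state $\hat p$): if $\ell>r$ Left moves to $(G^L,\widehat{p-\ell})$, or, including the marker (allowed when $\ell\ge r$), to $(G^L,p-\ell)$; if $\ell=r$ Left wins, the marker passes to Right, play continues at $(G^L,p-\ell)$; if $\ell<r$ Right moves to $(G^R,\widehat{p+r})$. Symmetrically when Right holds the marker (state $p$): if $r>\ell$ Right moves to $(G^R,p+r)$ or, including the marker, to $(G^R,\widehat{p+r})$; if $r=\ell$ Right wins, the marker passes to Left, play continues at $(G^R,\widehat{p+r})$; if $r<\ell$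 Left moves to $(G^L,p-\ell)$. A player who wins a bid but has no option loses. $o(G,\tilde p)\in\{\mathrm L,\mathrm R\}$ is the winner under optimal play; $\mathrm L>\mathrm R$. Disjunctive sum $G+H=\{G^{\mathcal L}+H,G+H^{\mathcal L}\mid G^{\mathcal R}+H,G+H^{\mathcal R}\}$. $G\ge H$ means $o(G+X,\tilde p)\ge o(H+X,\tilde p)$ for all game forms $X$ and all $\tilde p\in\mathcal B$; $G>H$ means $G\ge H$ and not $H\ge G$. *)

theory Defs
  imports Main "HOL-Library.FSet"
begin

datatype game = Game (lopts: "game fset") (ropts: "game fset")

primrec birthday :: "game \<Rightarrow> nat" where
  "birthday (Game L R) = Suc (Max (insert 0 (fset (fimage birthday L |\<union>| fimage birthday R))))"

lemma birthday_lopt: "G' |\<in>| lopts G \<Longrightarrow> birthday G' < birthday G"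
  by (cases G) (auto simp: le_imp_less_Suc intro!: Max_ge)

lemma birthday_ropt: "G' |\<in>| ropts G \<Longrightarrow> birthday G' < birthday G"
  by (cases G) (auto simp: le_imp_less_Suc intro!: Max_ge)

primrec conj :: "game \<Rightarrow> game" where
  "conj (Game L R) = Game (fimage conj R) (fimage conj L)"

function gsum :: "game \<Rightarrow> game \<Rightarrow> game" where
  "gsum G H = Game
     ((\<lambda>GL. gsum GL H) |`| lopts G |\<union>| (\<lambda>HL. gsum G HL) |`| lopts H)
     ((\<lambda>GR. gsum GR H) |`| ropts G |\<union>| (\<lambda>HR. gsum G HR) |`| ropts H)"
  by auto
termination
  by (relation "measure (\<lambda>(G, H). birthday G + birthday H)")
     (auto dest: birthday_lopt birthday_ropt)

primrec nat_game :: "nat \<Rightarrow> game" where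
  "nat_game 0 = Game {||} {||}"
| "nat_game (Suc n) = Game {|nat_game n|} {||}"

definition int_game :: "int \<Rightarrow> game" where
  "int_game n = (if 0 \<le> n then nat_game (nat n) else conj (nat_game (nat (- n))))"

text \<open>A budget state is a pair (p, h): Left holds p dollars, Right holds TB - p;
h = True means Left holds the tie-breaking marker (the state \<open>\<hat>p\<close>),
h = False means Right holds it (the state p).
\<open>lwin TB G p h\<close> means: Left has a (pure) strategy that wins (G, state) whatever Right does.\<close>
inductive lwin :: "nat \<Rightarrow> game \<Rightarrow> nat \<Rightarrow> bool \<Rightarrow> bool" for TB :: nat where
  left_marker:
  "\<lbrakk> l \<le> p;
     \<forall>r. r \<le> TB - p \<longrightarrow>
        (if l \<ge> r then
           (\<exists>GL h'. GL |\<in>| lopts G \<and> (h' = False \<or> l > r) \<and> lwin TB GL (p - l) h')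
         else
           (\<forall>GR. GR |\<in>| ropts G \<longrightarrow> lwin TB GR (p + r) True)) \<rbrakk>
   \<Longrightarrow> lwin TB G p True"
| right_marker:
  "\<lbrakk> l \<le> p;
     \<forall>r. r \<le> TB - p \<longrightarrow>
        (if r \<ge> l then
           (\<forall>GR h'. GR |\<in>| ropts G \<and> (h' = True \<or> r > l) \<longrightarrow> lwin TB GR (p + r) h')
         else
           (\<exists>GL. GL |\<in>| lopts G \<and> lwin TB GL (p - l) False)) \<rbrakk>
   \<Longrightarrow> lwin TB G p False"

text \<open>Outcome: True = L, False = R (so L > R corresponds to True > False).\<close>
definition outcome :: "nat \<Rightarrow> game \<Rightarrow> nat \<Rightarrow> bool \<Rightarrow> bool" where
  "outcome TB G p h = lwin TB G p h"

definition budgets :: "nat \<Rightarrow> (nat \<times> bool) set" where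
  "budgets TB = {(p, h). p \<le> TB}"

definition game_ge :: "nat \<Rightarrow> game \<Rightarrow> game \<Rightarrow> bool" where
  "game_ge TB G H \<longleftrightarrow>
     (\<forall>X. \<forall>(p, h) \<in> budgets TB. outcome TB (gsum G X) p h \<ge> outcome TB (gsum H X) p h)"

definition game_gt :: "nat \<Rightarrow> game \<Rightarrow> game \<Rightarrow> bool" where
  "game_gt TB G H \<longleftrightarrow> game_ge TB G H \<and> \<not> game_ge TB H G"

end

theory Submission
  imports Defs
begin

declare gsum.simps[simp del]

lemma lopts_gsum: "lopts (gsum G H) = (\<lambda>GL. gsum GL H) |`| lopts G |\<union>| (\<lambda>HL. gsum G HL) |`| lopts H"
  by (subst gsum.simps) simp

lemma ropts_gsum: "ropts (gsum G H) = (\<lambda>GR. gsum GR H) |`| ropts G |\<union>| (\<lambda>HR. gsum G HR) |`| ropts H"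
  by (subst gsum.simps) simp

inductive gdom :: "game \<Rightarrow> game \<Rightarrow> bool" where
  "\<lbrakk> \<forall>HL. HL |\<in>| lopts H \<longrightarrow> (\<exists>GL. GL |\<in>| lopts G \<and> gdom GL HL);
     \<forall>GR. GR |\<in>| ropts G \<longrightarrow> (\<exists>HR. HR |\<in>| ropts H \<and> gdom GR HR) \<rbrakk> \<Longrightarrow> gdom G H"

lemma lwin_gdom: "lwin TB K p h \<Longrightarrow> gdom K' K \<Longrightarrow> lwin TB K' p h"
proof (induction arbitrary: K' rule: lwin.induct)
  case (left_marker l p G)
  from left_marker.prems obtain
    A: "\<forall>HL. HL |\<in>| lopts G \<longrightarrow> (\<exists>GL. GL |\<in>| lopts K' \<and> gdom GL HL)" and
    B: "\<forall>GR. GR |\<in>| ropts K' \<longrightarrow> (\<exists>HR. HR |\<in>| ropts G \<and> gdom GR HR)"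
    by (auto elim: gdom.cases)
  show ?case
  proof (rule lwin.left_marker[of l], fact, intro allI impI)
    fix r assume r: "r \<le> TB - p"
    show "if r \<le> l then \<exists>GL h'. GL |\<in>| lopts K' \<and> (h' = False \<or> r < l) \<and> lwin TB GL (p - l) h'
          else \<forall>GR. GR |\<in>| ropts K' \<longrightarrow> lwin TB GR (p + r) True"
    proof (cases "r \<le> l")
      case True
      have "\<exists>GL h'. GL |\<in>| lopts G \<and> (h' = False \<or> r < l) \<and> (\<forall>K'. gdom K' GL \<longrightarrow> lwin TB K' (p - l) h')"
        using left_marker(2)[rule_format, OF r] True by simp blast
      then obtain GL h' where
        GL: "GL |\<in>| lopts G" and hh: "h' = False \<or> r < l" and W: "\<forall>K'. gdom K' GL \<longrightarrow> lwin TB K' (p - l) h'"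
        by blast
      from A GL obtain GL' where "GL' |\<in>| lopts K'" "gdom GL' GL" by blast
      with W have "GL' |\<in>| lopts K' \<and> (h' = False \<or> r < l) \<and> lwin TB GL' (p - l) h'" using hh by blast
      then have "\<exists>GL h'. GL |\<in>| lopts K' \<and> (h' = False \<or> r < l) \<and> lwin TB GL (p - l) h'" by blast
      with True show ?thesis by simp
    next
      case False
      with left_marker(2) r have
        "\<forall>GR. GR |\<in>| ropts G \<longrightarrow> (\<forall>K'. gdom K' GR \<longrightarrow> lwin TB K' (p + r) True)"
        by auto
      have "lwin TB GR' (p + r) True" if GR': "GR' |\<in>| ropts K'" for GR'
      proof -
        from B GR' obtain HR where "HR |\<in>| ropts G" "gdom GR' HR" by blast
        with \<open>\<forall>GR. GR |\<in>| ropts G \<longrightarrow> (\<forall>K'. gdom K' GR \<longrightarrow> lwin TB K' (p + r) True)\<close>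
        show ?thesis by blast
      qed
      with False show ?thesis by simp
    qed
  qed
next
  case (right_marker l p G)
  from right_marker.prems obtain
    A: "\<forall>HL. HL |\<in>| lopts G \<longrightarrow> (\<exists>GL. GL |\<in>| lopts K' \<and> gdom GL HL)" and
    B: "\<forall>GR. GR |\<in>| ropts K' \<longrightarrow> (\<exists>HR. HR |\<in>| ropts G \<and> gdom GR HR)"
    by (auto elim: gdom.cases)
  show ?case
  proof (rule lwin.right_marker[of l], fact, intro allI impI)
    fix r assume r: "r \<le> TB - p"
    show "if l \<le> r then \<forall>GR h'. GR |\<in>| ropts K' \<and> (h' = True \<or> l < r) \<longrightarrow> lwin TB GR (p + r) h'
          else \<exists>GL. GL |\<in>| lopts K' \<and> lwin TB GL (p - l) False"
    proof (cases "l \<le> r")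
      case True
      with right_marker(2) r have
        "\<forall>GR h'. GR |\<in>| ropts G \<and> (h' = True \<or> l < r) \<longrightarrow> (\<forall>K'. gdom K' GR \<longrightarrow> lwin TB K' (p + r) h')"
        by auto
      note W = this
      have "lwin TB GR' (p + r) h'" if GR': "GR' |\<in>| ropts K'" and hh: "h' = True \<or> l < r" for GR' h'
      proof -
        from B GR' obtain HR where "HR |\<in>| ropts G" "gdom GR' HR" by blast
        with W hh show ?thesis by blast
      qed
      with True show ?thesis by simp
    next
      case False
      have "\<exists>GL. GL |\<in>| lopts G \<and> (\<forall>K'. gdom K' GL \<longrightarrow> lwin TB K' (p - l) False)"
        using right_marker(2)[rule_format, OF r] False by simp blast
      then obtain GL where
        GL: "GL |\<in>| lopts G" and W: "\<forall>K'. gdom K' GL \<longrightarrow> lwin TB K' (p - l) False"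
        by blast
      from A GL obtain GL' where "GL' |\<in>| lopts K'" "gdom GL' GL" by blast
      with W have "\<exists>GL. GL |\<in>| lopts K' \<and> lwin TB GL (p - l) False" by blast
      with False show ?thesis by simp
    qed
  qed
qed

lemma gdom_gsum: "gdom G H \<Longrightarrow> gdom (gsum G X) (gsum H X)"
proof (induction arbitrary: X rule: gdom.induct)
  case (1 H G)
  show ?case
  proof (induction X)
    case (Game XL XR)
    show ?case
    proof (rule gdom.intros)
      show "\<forall>HL. HL |\<in>| lopts (gsum H (Game XL XR)) \<longrightarrow>
        (\<exists>GL. GL |\<in>| lopts (gsum G (Game XL XR)) \<and> gdom GL HL)"
        using 1 Game(1) by (fastforce simp: lopts_gsum)
      show "\<forall>GR. GR |\<in>| ropts (gsum G (Game XL XR)) \<longrightarrow>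
        (\<exists>HR. HR |\<in>| ropts (gsum H (Game XL XR)) \<and> gdom GR HR)"
        using 1 Game(2) by (fastforce simp: ropts_gsum)
    qed
  qed
qed


lemma gdom_ge: "gdom G H \<Longrightarrow> game_ge TB G H"
  unfolding game_ge_def outcome_def budgets_def
  by (auto intro: lwin_gdom gdom_gsum)

lemma game_ge_trans: "game_ge TB G H \<Longrightarrow> game_ge TB H K \<Longrightarrow> game_ge TB G K"
  unfolding game_ge_def by fastforce

lemma gdom_nat: "gdom (nat_game (Suc k)) (nat_game k)"
  by (induction k) (auto intro: gdom.intros)

lemma gdom_conj_nat: "gdom (conj (nat_game k)) (conj (nat_game (Suc k)))"
  by (induction k) (auto intro: gdom.intros)

lemma conj_nat0: "conj (nat_game 0) = nat_game 0"
  by simp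

lemma gdom_int: "gdom (int_game (k + 1)) (int_game k)"
proof (cases "k \<ge> 0")
  case True
  then have "nat (k + 1) = Suc (nat k)" by simp
  with True show ?thesis using gdom_nat[of "nat k"] by (simp add: int_game_def)
next
  case False
  show ?thesis
  proof (cases "k = -1")
    case True
    then show ?thesis using gdom_conj_nat[of 0] by (simp add: int_game_def)
  next
    case F2: False
    with False have "nat (- k) = Suc (nat (- (k + 1)))" by simp
    with False F2 show ?thesis using gdom_conj_nat[of "nat (- (k + 1))"]
      by (simp add: int_game_def)
  qed
qed

lemma ge_int: "game_ge TB (int_game (m + int k + 1)) (int_game m)"
proof (induction k)
  case 0
  then show ?case using gdom_ge gdom_int by simp
next
  case (Suc k)
  have "game_ge TB (int_game (m + int (Suc k) + 1)) (int_game (m + int k + 1))"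
    using gdom_ge gdom_int[of "m + int k + 1"] by (simp add: add.commute add.left_commute)
  then show ?case using Suc game_ge_trans by blast
qed

inductive IS :: "nat \<Rightarrow> nat \<Rightarrow> game \<Rightarrow> bool" where
  "\<lbrakk> (lopts K = {||}) = (a = 0); \<forall>KL. KL |\<in>| lopts K \<longrightarrow> IS (a - 1) b KL;
     (ropts K = {||}) = (b = 0); \<forall>KR. KR |\<in>| ropts K \<longrightarrow> IS a (b - 1) KR \<rbrakk> \<Longrightarrow> IS a b K"

lemma IS_win: "IS a b K \<Longrightarrow> b < a \<or> (a = b \<and> \<not> h) \<Longrightarrow> lwin TB K p h"
proof (induction arbitrary: p h rule: IS.induct)
  case (1 K a b)
  have IH1: "\<And>KL p h. KL |\<in>| lopts K \<Longrightarrow> b < a - 1 \<or> (a - 1 = b \<and> \<not> h) \<Longrightarrow> lwin TB KL p h"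
    using 1(3) by blast
  have IH2: "\<And>KR p h. KR |\<in>| ropts K \<Longrightarrow> b - 1 < a \<or> (a = b - 1 \<and> \<not> h) \<Longrightarrow> lwin TB KR p h"
    using 1(4) by blast
  show ?case
  proof (cases h)
    case True
    with 1 have ab: "b < a" by auto
    then obtain GL where GL: "GL |\<in>| lopts K" using 1(1) by blast
    have c1: "b < a - 1 \<or> (a - 1 = b \<and> \<not> False)" using ab by auto
    have "lwin TB GL (p - 0) False" using IH1[OF GL c1] .
    moreover have c2: "b - 1 < a \<or> (a = b - 1 \<and> \<not> True)" using ab by auto
    have "\<forall>GR. GR |\<in>| ropts K \<longrightarrow> lwin TB GR (p + r) True" for r
      using IH2[OF _ c2] by blast
    ultimately have "lwin TB K p True" using GL
      by (intro lwin.left_marker[of 0]) auto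
    then show ?thesis using True by simp
  next
    case False
    with 1 have ab: "b \<le> a" by auto
    have "lwin TB GR q h'" if GR: "GR |\<in>| ropts K" for GR q h'
    proof -
      have "b \<noteq> 0" using 1(2) GR by auto
      then have "b - 1 < a \<or> (a = b - 1 \<and> \<not> h')" using ab by auto
      then show ?thesis using IH2[OF GR] by blast
    qed
    then have "lwin TB K p False"
      by (intro lwin.right_marker[of 0]) auto
    then show ?thesis using False by simp
  qed
qed

lemma IS_lose: "lwin TB K p h \<Longrightarrow> IS a b K \<Longrightarrow> b < a \<or> (a = b \<and> \<not> h)"
proof (induction arbitrary: a b rule: lwin.induct)
  case (left_marker l p G)
  from left_marker(2)[rule_format, of 0] obtain GL h' where
    "GL |\<in>| lopts G" "\<forall>a b. IS a b GL \<longrightarrow> b < a \<or> (a = b \<and> \<not> h')" by auto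
  moreover from left_marker(3) have "(lopts G = {||}) = (a = 0)" "\<forall>KL. KL |\<in>| lopts G \<longrightarrow> IS (a - 1) b KL"
    by (auto elim: IS.cases)
  ultimately show ?case by fastforce
next
  case (right_marker l p G)
  from right_marker(3) have A: "(lopts G = {||}) = (a = 0)" "\<forall>KL. KL |\<in>| lopts G \<longrightarrow> IS (a - 1) b KL"
    "(ropts G = {||}) = (b = 0)" "\<forall>KR. KR |\<in>| ropts G \<longrightarrow> IS a (b - 1) KR"
    by (auto elim: IS.cases)
  show ?case
  proof (cases "l = 0")
    case True
    with right_marker(2)[rule_format, of 0] have
      "\<forall>GR. GR |\<in>| ropts G \<longrightarrow> (\<forall>a b. IS a b GR \<longrightarrow> b < a)" by auto
    with A show ?thesis by (cases "b = 0") (fastforce+)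
  next
    case False
    with right_marker(2)[rule_format, of 0] obtain GL where
      "GL |\<in>| lopts G" "\<forall>a b. IS a b GL \<longrightarrow> b < a \<or> a = b" by auto
    with A show ?thesis by fastforce
  qed
qed

lemma IS_nat: "IS a 0 (nat_game a)"
  by (induction a) (auto intro: IS.intros)

lemma IS_conj_nat: "IS 0 b (conj (nat_game b))"
  by (induction b) (auto intro: IS.intros)

lemma IS_int: "IS (nat k) (nat (- k)) (int_game k)"
  using IS_nat[of "nat k"] IS_conj_nat[of "nat (-k)"] by (simp add: int_game_def)

lemma IS_sum: "IS a b G \<Longrightarrow> IS c d H \<Longrightarrow> IS (a + c) (b + d) (gsum G H)"
proof (induction arbitrary: c d H rule: IS.induct)
  case (1 G a b)
  have G1: "(lopts G = {||}) = (a = 0)" and G3: "(ropts G = {||}) = (b = 0)" using 1(1) 1(2) by simp_all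
  have IHG1: "\<And>GL c d H. GL |\<in>| lopts G \<Longrightarrow> IS c d H \<Longrightarrow> IS (a - 1 + c) (b + d) (gsum GL H)"
    using 1(3) by blast
  have IHG2: "\<And>GR c d H. GR |\<in>| ropts G \<Longrightarrow> IS c d H \<Longrightarrow> IS (a + c) (b - 1 + d) (gsum GR H)"
    using 1(4) by blast
  from 1(5) show ?case
  proof (induction rule: IS.induct)
    case (1 H c d)
    have H1: "(lopts H = {||}) = (c = 0)" and H3: "(ropts H = {||}) = (d = 0)" using 1(1) 1(2) by simp_all
    have HIS1: "\<And>HL. HL |\<in>| lopts H \<Longrightarrow> IS (c - 1) d HL" using 1(3) by blast
    have HIS2: "\<And>HR. HR |\<in>| ropts H \<Longrightarrow> IS c (d - 1) HR" using 1(4) by blast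
    have HIS: "IS c d H" by (rule IS.intros) (use H1 H3 HIS1 HIS2 in auto)
    have IHH1: "\<And>HL. HL |\<in>| lopts H \<Longrightarrow> IS (a + (c - 1)) (b + d) (gsum G HL)" using 1(3) by blast
    have IHH2: "\<And>HR. HR |\<in>| ropts H \<Longrightarrow> IS (a + c) (b + (d - 1)) (gsum G HR)" using 1(4) by blast
    show ?case
    proof (rule IS.intros)
      show "(lopts (gsum G H) = {||}) = (a + c = 0)" using G1 H1 by (auto simp: lopts_gsum)
      show "(ropts (gsum G H) = {||}) = (b + d = 0)" using G3 H3 by (auto simp: ropts_gsum)
      show "\<forall>KL. KL |\<in>| lopts (gsum G H) \<longrightarrow> IS (a + c - 1) (b + d) KL"
      proof (intro allI impI)
        fix KL assume "KL |\<in>| lopts (gsum G H)"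
        then consider GL where "GL |\<in>| lopts G" "KL = gsum GL H" | HL where "HL |\<in>| lopts H" "KL = gsum G HL"
          by (auto simp: lopts_gsum)
        then show "IS (a + c - 1) (b + d) KL"
        proof cases
          case 1
          then have "a > 0" using G1 by auto
          then show ?thesis using 1 IHG1[OF 1(1) HIS] by simp
        next
          case 2
          then have "c > 0" using H1 by auto
          then show ?thesis using 2 IHH1[OF 2(1)] by simp
        qed
      qed
      show "\<forall>KR. KR |\<in>| ropts (gsum G H) \<longrightarrow> IS (a + c) (b + d - 1) KR"
      proof (intro allI impI)
        fix KR assume "KR |\<in>| ropts (gsum G H)"
        then consider GR where "GR |\<in>| ropts G" "KR = gsum GR H" | HR where "HR |\<in>| ropts H" "KR = gsum G HR"
          by (auto simp: ropts_gsum)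
        then show "IS (a + c) (b + d - 1) KR"
        proof cases
          case 1
          then have "b > 0" using G3 by auto
          then show ?thesis using 1 IHG2[OF 1(1) HIS] by simp
        next
          case 2
          then have "d > 0" using H3 by auto
          then show ?thesis using 2 IHH2[OF 2(1)] by simp
        qed
      qed
    qed
  qed
qed

theorem mainTheorem15:
  fixes TB :: nat and n m :: int
  assumes "n > m"
  shows "game_gt TB (int_game n) (int_game m)"
proof -
  define k where "k = nat (n - m - 1)"
  have nk: "n = m + int k + 1" using assms by (simp add: k_def)
  have ge: "game_ge TB (int_game n) (int_game m)" using ge_int[of TB m k] nk by simp
  define X where "X = int_game (- m)"
  have ISn: "IS (nat n + nat (- m)) (nat (- n) + nat (- (- m))) (gsum (int_game n) X)"
    unfolding X_def by (rule IS_sum[OF IS_int IS_int])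
  have ISm: "IS (nat m + nat (- m)) (nat (- m) + nat (- (- m))) (gsum (int_game m) X)"
    unfolding X_def by (rule IS_sum[OF IS_int IS_int])
  have w: "lwin TB (gsum (int_game n) X) 0 True"
    by (rule IS_win[OF ISn]) (use assms in auto)
  have l: "\<not> lwin TB (gsum (int_game m) X) 0 True"
    using IS_lose[OF _ ISm] by auto
  have "\<not> game_ge TB (int_game m) (int_game n)"
  proof
    assume "game_ge TB (int_game m) (int_game n)"
    then have "outcome TB (gsum (int_game n) X) 0 True \<le> outcome TB (gsum (int_game m) X) 0 True"
      unfolding game_ge_def budgets_def by auto
    with w l show False by (simp add: outcome_def)
  qed
  with ge show ?thesis by (simp add: game_gt_def)
qed

end
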